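(* Let $(\Lambda,\mathcal{G}_\Lambda)$ and $(\Xi,\mathcal{G}_\Xi)$ be labeled graphs whose vertex groups are all directly-indecomposable cyclic groups. Then $(\Lambda,\mathcal{G}_\Lambda)\cong(\Xi,\mathcal{G}_\Xi)$ (as labeled graphs) if and only if their $T_0$-quotients satisfy $(\Lambda_0,\mathcal{G}_{\Lambda_0})\cong(\Xi_0,\mathcal{G}_{\Xi_0})$ (as labeled graphs).
   Context: A labeled graph $(\Lambda,\mathcal{G}_\Lambda)$ consists of a nonempty finite simplicial graph $\Lambda$ with vertex set $V_\Lambda$ and a family $\mathcal{G}_\Lambda=\{G_v\}_{v\in V_\Lambda}$ of nontrivial groups. A labeled-graph isomorphism $(\Gamma,\mathcal{G}_\Gamma)\to(\Sigma,\mathcal{G}_\Sigma)$ is a bijection $f:V_\Gamma\to V_\Sigma$ such that $u,v$ are adjacent in $\Gamma$ iff $f(u),f(v)$ are adjacent in $\Sigma$, and $G_u\cong G_{f(u)}$ for every $u\in V_\Gamma$. A cyclic group is primary if it has prime-power order, and directly-indecomposable if it is infinite or primary. $\mathrm{MCS}(\Lambda)$ denotes the set of maximal complete subgraphs of $\Lambda$. Define $u\sim_\Lambda v$ iff for every $\Theta\in\mathrm{MCS}(\Lambda)$, $u\in\Theta\Leftrightarrow v\in\Theta$; write $\tilde u$ for the class of $u$. The $T_0$-quotient $\Lambda_0$ is the graph whose vertices are the $\sim_\Lambda$-classes, with $\tilde u,\tilde v$ adjacent iff $u,v$ are adjacent in $\Lambda$ and $u\not\sim_\Lambda v$. The $T_0$-quotient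 of $(\Lambda,\mathcal{G}_\Lambda)$ is $(\Lambda_0,\mathcal{G}_{\Lambda_0})$ with $G_{\tilde u}:=\prod_{v\in\tilde u}G_v$ (direct product). *)

theory Defs
  imports "HOL-Algebra.Algebra" "HOL-Computational_Algebra.Primes"
begin

definition simple_graph :: "'a set \<Rightarrow> ('a \<Rightarrow> 'a \<Rightarrow> bool) \<Rightarrow> bool" where
  "simple_graph V E \<longleftrightarrow> finite V \<and> V \<noteq> {} \<and>
     (\<forall>u v. E u v \<longrightarrow> u \<in> V \<and> v \<in> V \<and> u \<noteq> v \<and> E v u)"

definition labeled_graph :: "'a set \<Rightarrow> ('a \<Rightarrow> 'a \<Rightarrow> bool) \<Rightarrow> ('a \<Rightarrow> ('g, 'm) monoid_scheme) \<Rightarrow> bool" where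
  "labeled_graph V E G \<longleftrightarrow> simple_graph V E \<and>
     (\<forall>v\<in>V. group (G v) \<and> carrier (G v) \<noteq> {\<one>\<^bsub>G v\<^esub>})"

definition lg_iso ::
  "'a set \<Rightarrow> ('a \<Rightarrow> 'a \<Rightarrow> bool) \<Rightarrow> ('a \<Rightarrow> ('g, 'm) monoid_scheme) \<Rightarrow>
   'b set \<Rightarrow> ('b \<Rightarrow> 'b \<Rightarrow> bool) \<Rightarrow> ('b \<Rightarrow> ('h, 'n) monoid_scheme) \<Rightarrow> bool" where
  "lg_iso V E G W F H \<longleftrightarrow>
     (\<exists>f. bij_betw f V W \<and> (\<forall>u\<in>V. \<forall>v\<in>V. E u v \<longleftrightarrow> F (f u) (f v)) \<and>
          (\<forall>u\<in>V. G u \<cong> H (f u)))"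

definition dir_indec_cyclic :: "('g, 'm) monoid_scheme \<Rightarrow> bool" where
  "dir_indec_cyclic G \<longleftrightarrow> group G \<and> cyclic_group G \<and>
     (infinite (carrier G) \<or> (\<exists>p k. Factorial_Ring.prime (p::nat) \<and> k \<ge> 1 \<and> card (carrier G) = p ^ k))"

definition complete_sub :: "'a set \<Rightarrow> ('a \<Rightarrow> 'a \<Rightarrow> bool) \<Rightarrow> 'a set \<Rightarrow> bool" where
  "complete_sub V E S \<longleftrightarrow> S \<subseteq> V \<and> (\<forall>u\<in>S. \<forall>v\<in>S. u \<noteq> v \<longrightarrow> E u v)"

definition MCS :: "'a set \<Rightarrow> ('a \<Rightarrow> 'a \<Rightarrow> bool) \<Rightarrow> 'a set set" where
  "MCS V E = {S. complete_sub V E S \<and> (\<forall>T. complete_sub V E T \<and> S \<subseteq> T \<longrightarrow> T = S)}"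

definition T0_rel :: "'a set \<Rightarrow> ('a \<Rightarrow> 'a \<Rightarrow> bool) \<Rightarrow> 'a \<Rightarrow> 'a \<Rightarrow> bool" where
  "T0_rel V E u v \<longleftrightarrow> (\<forall>\<Theta>\<in>MCS V E. u \<in> \<Theta> \<longleftrightarrow> v \<in> \<Theta>)"

definition T0_class :: "'a set \<Rightarrow> ('a \<Rightarrow> 'a \<Rightarrow> bool) \<Rightarrow> 'a \<Rightarrow> 'a set" where
  "T0_class V E u = {v \<in> V. T0_rel V E u v}"

definition T0_verts :: "'a set \<Rightarrow> ('a \<Rightarrow> 'a \<Rightarrow> bool) \<Rightarrow> 'a set set" where
  "T0_verts V E = T0_class V E ` V"

definition T0_adj :: "'a set \<Rightarrow> ('a \<Rightarrow> 'a \<Rightarrow> bool) \<Rightarrow> 'a set \<Rightarrow> 'a set \<Rightarrow> bool" where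
  "T0_adj V E A B \<longleftrightarrow> (\<exists>u\<in>V. \<exists>v\<in>V. A = T0_class V E u \<and> B = T0_class V E v \<and>
       E u v \<and> \<not> T0_rel V E u v)"

definition T0_labels :: "('a \<Rightarrow> ('g, 'm) monoid_scheme) \<Rightarrow> 'a set \<Rightarrow> ('a \<Rightarrow> 'g) monoid" where
  "T0_labels G A = product_group A G"

end

theory Submission
  imports Defs
begin


lemma cyclic_iso_Zmod:
  fixes G (structure)
  assumes G: "group G" and cyc: "cyclic_group G"
  shows "integer_mod_group (card (carrier G)) \<cong> G"
proof -
  interpret group G by (rule G)
  obtain g where g: "g \<in> carrier G" and cg: "carrier G = range (\<lambda>n::int. g [^] n)"
    using cyc cyclic_group by blast
  define n where "n = ord g"
  define \<phi> where "\<phi> = (\<lambda>k::int. g [^] k)"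
  have modeq: "g [^] (k mod int n) = g [^] k" for k
    using int_pow_eq[OF g] unfolding n_def
    by (metis dvd_minus_mod)
  have iso: "\<phi> \<in> iso (integer_mod_group n) G"
  proof (rule isoI)
    show "\<phi> \<in> hom (integer_mod_group n) G"
      by (rule homI) (auto simp: \<phi>_def modeq g int_pow_mult)
    show "bij_betw \<phi> (carrier (integer_mod_group n)) (carrier G)"
      unfolding bij_betw_def
    proof
      show "inj_on \<phi> (carrier (integer_mod_group n))"
      proof (rule inj_onI)
        fix a b assume a: "a \<in> carrier (integer_mod_group n)" and b: "b \<in> carrier (integer_mod_group n)"
          and e: "\<phi> a = \<phi> b"
        then have d: "int n dvd b - a" using int_pow_eq[OF g] unfolding \<phi>_def n_def by simp
        show "a = b"
        proof (cases "n = 0")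
          case True then show ?thesis using d by simp
        next
          case False
          then have "0 \<le> a" "a < int n" "0 \<le> b" "b < int n" using a b
            by (auto simp: carrier_integer_mod_group)
          moreover obtain c where c: "b - a = int n * c" using d by (auto elim: dvdE)
          ultimately show ?thesis
          proof -
            have "c = 0"
            proof (rule ccontr)
              assume "c \<noteq> 0"
              then have "c \<ge> 1 \<or> c \<le> -1" by auto
              then show False
              proof
                assume "c \<ge> 1" then have "int n * c \<ge> int n * 1"
                  by (intro mult_left_mono) auto
                then show False using c \<open>0 \<le> a\<close> \<open>b < int n\<close> by simp
              next
                assume "c \<le> -1" then have "int n * c \<le> int n * (-1)"
                  by (intro mult_left_mono) auto
                then show False using c \<open>0 \<le> b\<close> \<open>a < int n\<close> by simp
              qed
            qed
            then show ?thesis using c by simp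
          qed
        qed
      qed
      show "\<phi> ` carrier (integer_mod_group n) = carrier G"
      proof
        show "\<phi> ` carrier (integer_mod_group n) \<subseteq> carrier G" using g by (auto simp: \<phi>_def)
        show "carrier G \<subseteq> \<phi> ` carrier (integer_mod_group n)"
        proof
          fix x assume "x \<in> carrier G"
          then obtain k :: int where k: "x = g [^] k" using cg by auto
          have "k mod int n \<in> carrier (integer_mod_group n)"
            by (auto simp: carrier_integer_mod_group)
          moreover have "\<phi> (k mod int n) = x" using k modeq by (simp add: \<phi>_def)
          ultimately show "x \<in> \<phi> ` carrier (integer_mod_group n)" by force
        qed
      qed
    qed
  qed
  then have isoZ: "integer_mod_group n \<cong> G" by (auto simp: is_iso_def)
  have "card (carrier G) = n"
  proof (cases "n = 0")
    case True
    then have "infinite (carrier (integer_mod_group n))" by (simp add: carrier_integer_mod_group)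
    then have "infinite (carrier G)" using iso_finite[OF isoZ] by simp
    then show ?thesis using True by simp
  next
    case False
    then show ?thesis using iso_same_card[OF isoZ] by (simp add: carrier_integer_mod_group)
  qed
  then show ?thesis using isoZ by simp
qed




definition powrel :: "('g,'m) monoid_scheme \<Rightarrow> nat \<Rightarrow> ('g \<times> 'g) set" where
  "powrel K m = {(x,y). x \<in> carrier K \<and> y \<in> carrier K \<and> (\<exists>z\<in>carrier K. x = y \<otimes>\<^bsub>K\<^esub> z [^]\<^bsub>K\<^esub> m)}"

lemma card_quot_fun:
  assumes "R \<subseteq> A \<times> A" and "\<And>x y. x \<in> A \<Longrightarrow> y \<in> A \<Longrightarrow> (x,y) \<in> R \<longleftrightarrow> g x = g y"
  shows "card (A // R) = card (g ` A)"
proof -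
  define fib where "fib b = {x\<in>A. g x = b}" for b
  have cls: "R `` {x} = fib (g x)" if "x \<in> A" for x
    using assms that unfolding fib_def by auto
  have "A // R = fib ` (g ` A)"
    unfolding quotient_def using cls by auto
  moreover have "inj_on fib (g ` A)"
    unfolding fib_def by (rule inj_onI) blast
  ultimately show ?thesis by (simp add: card_image)
qed

lemma powrel_iso:
  assumes K: "group K" and C: "group C" and phi: "\<phi> \<in> iso K C"
    and x: "x \<in> carrier K" and y: "y \<in> carrier K"
  shows "(x,y) \<in> powrel K m \<longleftrightarrow> (\<phi> x, \<phi> y) \<in> powrel C m"
proof -
  interpret h: group_hom K C \<phi>
    using K C phi by (simp add: group_hom_def group_hom_axioms_def iso_imp_homomorphism)
  have inj: "inj_on \<phi> (carrier K)" and sur: "\<phi> ` carrier K = carrier C"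
    using phi by (auto simp: iso_iff)
  show ?thesis
  proof
    assume "(x,y) \<in> powrel K m"
    then obtain z where z: "z \<in> carrier K" "x = y \<otimes>\<^bsub>K\<^esub> z [^]\<^bsub>K\<^esub> m"
      by (auto simp: powrel_def)
    then have "\<phi> x = \<phi> y \<otimes>\<^bsub>C\<^esub> (\<phi> z) [^]\<^bsub>C\<^esub> m"
      using y by (simp add: h.hom_nat_pow)
    then show "(\<phi> x, \<phi> y) \<in> powrel C m"
      using x y z by (auto simp: powrel_def intro!: bexI[of _ "\<phi> z"])
  next
    assume "(\<phi> x, \<phi> y) \<in> powrel C m"
    then obtain z' where z': "z' \<in> carrier C" "\<phi> x = \<phi> y \<otimes>\<^bsub>C\<^esub> z' [^]\<^bsub>C\<^esub> m"
      by (auto simp: powrel_def)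
    then obtain z where z: "z \<in> carrier K" "z' = \<phi> z" using sur by auto
    have e: "\<phi> (y \<otimes>\<^bsub>K\<^esub> z [^]\<^bsub>K\<^esub> m) = \<phi> y \<otimes>\<^bsub>C\<^esub> (\<phi> z) [^]\<^bsub>C\<^esub> m"
      using y z by (simp add: h.hom_nat_pow)
    have "\<phi> x = \<phi> (y \<otimes>\<^bsub>K\<^esub> z [^]\<^bsub>K\<^esub> m)"
      using z' z e by simp
    then have "x = y \<otimes>\<^bsub>K\<^esub> z [^]\<^bsub>K\<^esub> m"
      by (rule inj_onD[OF inj]) (use x y z in auto)
    then show "(x,y) \<in> powrel K m"
      using x y z by (auto simp: powrel_def)
  qed
qed

lemma card_powrel_iso:
  assumes K: "group K" and C: "group C" and phi: "\<phi> \<in> iso K C"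
    and nf: "\<And>x y. x \<in> carrier C \<Longrightarrow> y \<in> carrier C \<Longrightarrow> (x,y) \<in> powrel C m \<longleftrightarrow> f x = f y"
  shows "card (carrier K // powrel K m) = card (f ` carrier C)"
proof -
  have sur: "\<phi> ` carrier K = carrier C" and into: "\<And>x. x \<in> carrier K \<Longrightarrow> \<phi> x \<in> carrier C"
    using phi by (auto simp: iso_iff)
  have "card (carrier K // powrel K m) = card ((f \<circ> \<phi>) ` carrier K)"
  proof (rule card_quot_fun)
    show "powrel K m \<subseteq> carrier K \<times> carrier K" by (auto simp: powrel_def)
    fix x y assume "x \<in> carrier K" "y \<in> carrier K"
    then show "(x, y) \<in> powrel K m \<longleftrightarrow> (f \<circ> \<phi>) x = (f \<circ> \<phi>) y"
      using powrel_iso[OF K C phi] nf into by simp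
  qed
  also have "(f \<circ> \<phi>) ` carrier K = f ` carrier C" using sur by (metis image_comp)
  finally show ?thesis .
qed

lemma pow_product_group:
  assumes "\<And>i. i \<in> I \<Longrightarrow> group (G i)" and z: "z \<in> carrier (product_group I G)"
  shows "z [^]\<^bsub>product_group I G\<^esub> (k::nat) = (\<lambda>i\<in>I. z i [^]\<^bsub>G i\<^esub> k)"
proof (induction k)
  case 0 then show ?case by simp
next
  case (Suc k)
  then show ?case using z by (auto simp: intro!: restrict_ext)
qed

lemma Zmod_comp:
  fixes x y :: int and m n :: nat
  assumes m: "m > 0" and x: "x \<in> carrier (integer_mod_group n)" and y: "y \<in> carrier (integer_mod_group n)"
  shows "(\<exists>z\<in>carrier (integer_mod_group n). x = (y + int m * z) mod int n) \<longleftrightarrow>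
         x mod int (gcd m n) = y mod int (gcd m n)"
proof -
  define d where "d = int (gcd m n)"
  have dm: "d dvd int m" and dn: "d dvd int n" unfolding d_def by (simp_all add: int_dvd_int_iff)
  have xn: "x mod int n = x"
    using x by (cases "n = 0") (auto simp: carrier_integer_mod_group)
  show ?thesis
  proof
    assume "\<exists>z\<in>carrier (integer_mod_group n). x = (y + int m * z) mod int n"
    then obtain z where z: "x = (y + int m * z) mod int n" by blast
    have "x mod d = (y + int m * z) mod d"
      using z dn by (simp add: mod_mod_cancel)
    also have "\<dots> = y mod d" using dm
      by (metis dvd_mult2 mod_add_self2 mod_mod_trivial mod_add_left_eq mod_0 dvd_imp_mod_0
           add.right_neutral mod_add_right_eq)
    finally show "x mod int (gcd m n) = y mod int (gcd m n)" unfolding d_def .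
  next
    assume "x mod int (gcd m n) = y mod int (gcd m n)"
    then have "d dvd x - y" unfolding d_def by (simp add: mod_eq_dvd_iff)
    then obtain k where k: "x - y = d * k" by (auto elim: dvdE)
    have "\<exists>u w. u * int m + w * int n = d"
      unfolding d_def using bezout_int[of "int m" "int n"] by (simp add: gcd_int_def)
    then obtain u w where uw: "d = u * int m + w * int n" by metis
    define z where "z = (k * u) mod int n"
    have zc: "z \<in> carrier (integer_mod_group n)"
      unfolding z_def by (auto simp: carrier_integer_mod_group)
    have "(y + int m * z) mod int n = (y + int m * (k*u)) mod int n"
      unfolding z_def by (metis mod_add_right_eq mod_mult_right_eq)
    also have "y + int m * (k*u) = x + int n * (- (k * w))"
      using k uw by (simp add: algebra_simps)
    also have "(x + int n * (- (k * w))) mod int n = x" using xn by (metis mod_mult_self2 mult.commute)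
    finally show "\<exists>z\<in>carrier (integer_mod_group n). x = (y + int m * z) mod int n"
      using zc by metis
  qed
qed




lemma prod_Zmod_powrel:
  fixes n :: "'a \<Rightarrow> nat" and A :: "'a set"
  defines "C \<equiv> product_group A (\<lambda>v. integer_mod_group (n v))"
  assumes m: "m > 0" and x: "x \<in> carrier C" and y: "y \<in> carrier C"
  shows "(x,y) \<in> powrel C m \<longleftrightarrow>
     (\<lambda>v\<in>A. x v mod int (gcd m (n v))) = (\<lambda>v\<in>A. y v mod int (gcd m (n v)))"
proof -
  have grp: "\<And>v. v \<in> A \<Longrightarrow> group (integer_mod_group (n v))" by simp
  have xv: "\<And>v. v \<in> A \<Longrightarrow> x v \<in> carrier (integer_mod_group (n v))"
    and yv: "\<And>v. v \<in> A \<Longrightarrow> y v \<in> carrier (integer_mod_group (n v))"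
    using x y by (auto simp: C_def PiE_iff)
  have xe: "x \<in> extensional A" using x by (auto simp: C_def PiE_iff)
  have key: "x = y \<otimes>\<^bsub>C\<^esub> z [^]\<^bsub>C\<^esub> m \<longleftrightarrow> (\<forall>v\<in>A. x v = (y v + int m * z v) mod int (n v))"
    if z: "z \<in> carrier C" for z
  proof -
    have "z [^]\<^bsub>C\<^esub> m = (\<lambda>v\<in>A. (int m * z v) mod int (n v))"
      unfolding C_def using pow_product_group[OF grp z[unfolded C_def]] by simp
    then have "y \<otimes>\<^bsub>C\<^esub> z [^]\<^bsub>C\<^esub> m = (\<lambda>v\<in>A. (y v + int m * z v) mod int (n v))"
      unfolding C_def by (auto intro!: restrict_ext simp: mod_add_right_eq)
    moreover have "x = (\<lambda>v\<in>A. (y v + int m * z v) mod int (n v)) \<longleftrightarrow> (\<forall>v\<in>A. x v = (y v + int m * z v) mod int (n v))"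
    proof
      assume "\<forall>v\<in>A. x v = (y v + int m * z v) mod int (n v)"
      then show "x = (\<lambda>v\<in>A. (y v + int m * z v) mod int (n v))"
        by (intro extensionalityI[OF xe]) auto
    qed auto
    ultimately show ?thesis by simp
  qed
  show ?thesis
  proof
    assume "(x,y) \<in> powrel C m"
    then obtain z where z: "z \<in> carrier C" "x = y \<otimes>\<^bsub>C\<^esub> z [^]\<^bsub>C\<^esub> m"
      by (auto simp: powrel_def)
    then have "\<forall>v\<in>A. x v = (y v + int m * z v) mod int (n v)" using key by blast
    moreover have "\<And>v. v \<in> A \<Longrightarrow> z v \<in> carrier (integer_mod_group (n v))"
      using z by (auto simp: C_def PiE_iff)
    ultimately have "\<forall>v\<in>A. x v mod int (gcd m (n v)) = y v mod int (gcd m (n v))"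
      using Zmod_comp[OF m xv yv] by blast
    then show "(\<lambda>v\<in>A. x v mod int (gcd m (n v))) = (\<lambda>v\<in>A. y v mod int (gcd m (n v)))"
      by (auto intro: restrict_ext)
  next
    assume eqf: "(\<lambda>v\<in>A. x v mod int (gcd m (n v))) = (\<lambda>v\<in>A. y v mod int (gcd m (n v)))"
    have "\<forall>v\<in>A. x v mod int (gcd m (n v)) = y v mod int (gcd m (n v))"
    proof
      fix v assume "v \<in> A"
      then show "x v mod int (gcd m (n v)) = y v mod int (gcd m (n v))"
        using fun_cong[OF eqf, of v] by simp
    qed
    then have "\<forall>v\<in>A. \<exists>z\<in>carrier (integer_mod_group (n v)). x v = (y v + int m * z) mod int (n v)"
      using Zmod_comp[OF m xv yv] by blast
    then obtain zz where zz: "\<And>v. v \<in> A \<Longrightarrow> zz v \<in> carrier (integer_mod_group (n v)) \<and>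
         x v = (y v + int m * zz v) mod int (n v)" by metis
    define z where "z = (\<lambda>v\<in>A. zz v)"
    have zc: "z \<in> carrier C" using zz by (auto simp: C_def z_def)
    have "x = y \<otimes>\<^bsub>C\<^esub> z [^]\<^bsub>C\<^esub> m" using key[OF zc] zz by (simp add: z_def)
    then show "(x,y) \<in> powrel C m" using x y zc by (auto simp: powrel_def)
  qed
qed

lemma prod_Zmod_image:
  fixes n :: "'a \<Rightarrow> nat"
  assumes m: "m > 0"
  shows "(\<lambda>x. \<lambda>v\<in>A. x v mod int (gcd m (n v))) ` carrier (product_group A (\<lambda>v. integer_mod_group (n v)))
         = (\<Pi>\<^sub>E v\<in>A. {0..<int (gcd m (n v))})"
proof
  have pos: "int (gcd m (n v)) > 0" for v using m by simp
  show "(\<lambda>x. \<lambda>v\<in>A. x v mod int (gcd m (n v))) ` carrier (product_group A (\<lambda>v. integer_mod_group (n v)))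
         \<subseteq> (\<Pi>\<^sub>E v\<in>A. {0..<int (gcd m (n v))})"
  proof (rule image_subsetI)
    fix x
    show "(\<lambda>v\<in>A. x v mod int (gcd m (n v))) \<in> (\<Pi>\<^sub>E v\<in>A. {0..<int (gcd m (n v))})"
      using pos by (simp add: PiE_iff)
  qed
  show "(\<Pi>\<^sub>E v\<in>A. {0..<int (gcd m (n v))}) \<subseteq> (\<lambda>x. \<lambda>v\<in>A. x v mod int (gcd m (n v))) ` carrier (product_group A (\<lambda>v. integer_mod_group (n v)))"
  proof
    fix t assume t: "t \<in> (\<Pi>\<^sub>E v\<in>A. {0..<int (gcd m (n v))})"
    have tc: "t \<in> carrier (product_group A (\<lambda>v. integer_mod_group (n v)))"
    proof -
      have "t v \<in> carrier (integer_mod_group (n v))" if "v \<in> A" for v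
      proof (cases "n v = 0")
        case False
        then have "int (gcd m (n v)) \<le> int (n v)" by simp
        moreover have "0 \<le> t v \<and> t v < int (gcd m (n v))" using t that by (auto simp: PiE_iff)
        ultimately have "0 \<le> t v \<and> t v < int (n v)" by linarith
        then show ?thesis using False by (auto simp: carrier_integer_mod_group)
      qed (simp add: carrier_integer_mod_group)
      then show ?thesis unfolding carrier_product_group
        by (intro PiE_I) (auto intro: PiE_arb[OF t])
    qed
    have te: "t \<in> extensional A" using t by (simp add: PiE_iff)
    have "(\<lambda>v\<in>A. t v mod int (gcd m (n v))) = t"
    proof (rule extensionalityI[OF _ te])
      fix v assume v: "v \<in> A"
      then have "0 \<le> t v" "t v < int (gcd m (n v))" using t by (auto dest: PiE_mem)
      then show "(\<lambda>v\<in>A. t v mod int (gcd m (n v))) v = t v" using v by simp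
    qed simp
    then show "t \<in> (\<lambda>x. \<lambda>v\<in>A. x v mod int (gcd m (n v))) ` carrier (product_group A (\<lambda>v. integer_mod_group (n v)))"
      using tc by (intro rev_image_eqI[of t]) auto
  qed
qed

lemma idx_Zmod:
  fixes n :: "'a \<Rightarrow> nat"
  assumes K: "group K" and A: "finite A" and m: "m > 0"
    and phi: "\<phi> \<in> iso K (product_group A (\<lambda>v. integer_mod_group (n v)))"
  shows "card (carrier K // powrel K m) = (\<Prod>v\<in>A. gcd m (n v))"
proof -
  have "card (carrier K // powrel K m) = card ((\<lambda>x. \<lambda>v\<in>A. x v mod int (gcd m (n v))) ` carrier (product_group A (\<lambda>v. integer_mod_group (n v))))"
    by (rule card_powrel_iso[OF K _ phi], simp, rule prod_Zmod_powrel[OF m])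
  also have "\<dots> = (\<Prod>v\<in>A. gcd m (n v))"
    unfolding prod_Zmod_image[OF m] using A by (simp add: card_PiE)
  finally show ?thesis .
qed




definition good :: "nat \<Rightarrow> bool" where
  "good x \<longleftrightarrow> x = 0 \<or> (\<exists>p k. Factorial_Ring.prime p \<and> k \<ge> 1 \<and> x = p ^ k)"

definition ee :: "nat \<Rightarrow> nat \<Rightarrow> nat \<Rightarrow> nat" where
  "ee p j x = (if x = 0 then j else min j (multiplicity p x))"

lemma gcd_pp: "gcd ((p::nat) ^ j) (p ^ l) = p ^ min j l"
proof (cases "j \<le> l")
  case True
  then have "p ^ j dvd p ^ l" by (simp add: le_imp_power_dvd)
  then show ?thesis using True by (simp add: gcd_nat.absorb1)
next
  case False
  then have "p ^ l dvd p ^ j" by (simp add: le_imp_power_dvd)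
  then show ?thesis using False by (simp add: gcd_nat.absorb2)
qed

lemma gcd_good:
  assumes p: "Factorial_Ring.prime p" and x: "good x"
  shows "gcd (p ^ j) x = p ^ ee p j x"
proof (cases "x = 0")
  case True then show ?thesis by (simp add: ee_def)
next
  case False
  then obtain q k where q: "Factorial_Ring.prime q" "k \<ge> 1" "x = q ^ k" using x by (auto simp: good_def)
  show ?thesis
  proof (cases "q = p")
    case True
    then show ?thesis using q p False by (simp add: ee_def gcd_pp prime_imp_prime_elem)
  next
    case qp: False
    have nd: "\<not> p dvd x"
      using q p qp prime_dvd_power_iff[of p k q] primes_dvd_imp_eq by auto
    then have "multiplicity p x = 0" by (rule not_dvd_imp_multiplicity_0)
    moreover have "coprime (p ^ j) x"
      using q p qp by (simp add: primes_coprime)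
    ultimately show ?thesis using False by (simp add: ee_def)
  qed
qed

lemma ee_Suc:
  "ee p (Suc j) x = ee p j x + (if x = 0 \<or> Suc j \<le> multiplicity p x then 1 else 0)"
  by (auto simp: ee_def)

lemma sum_ind: "(\<Sum>v\<in>A. (if P v then 1 else 0 :: nat)) = card {v\<in>A. P v}" if "finite A"
  using that by (simp add: sum.If_cases Int_def)

lemma count_eq:
  fixes nA :: "'a \<Rightarrow> nat" and nB :: "'b \<Rightarrow> nat"
  assumes A: "finite A" and B: "finite B"
    and gA: "\<forall>v\<in>A. good (nA v)" and gB: "\<forall>w\<in>B. good (nB w)"
    and eq: "\<forall>m>0. (\<Prod>v\<in>A. gcd m (nA v)) = (\<Prod>w\<in>B. gcd m (nB w))"
  shows "card {v\<in>A. nA v = t} = card {w\<in>B. nB w = t}"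
proof -
  define cA where "cA p j = card {v\<in>A. nA v = 0 \<or> j \<le> multiplicity p (nA v)}" for p j
  define cB where "cB p j = card {w\<in>B. nB w = 0 \<or> j \<le> multiplicity p (nB w)}" for p j
  have S: "(\<Sum>v\<in>A. ee p j (nA v)) = (\<Sum>w\<in>B. ee p j (nB w))" if p: "Factorial_Ring.prime p" for p j
  proof -
    have "p ^ (\<Sum>v\<in>A. ee p j (nA v)) = (\<Prod>v\<in>A. gcd (p^j) (nA v))"
      using gA gcd_good[OF p] by (simp add: power_sum)
    also have "\<dots> = (\<Prod>w\<in>B. gcd (p^j) (nB w))"
      using eq p by (simp add: prime_gt_0_nat)
    also have "\<dots> = p ^ (\<Sum>w\<in>B. ee p j (nB w))"
      using gB gcd_good[OF p] by (simp add: power_sum)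
    finally show ?thesis using p prime_gt_1_nat power_inject_exp by blast
  qed
  have c: "cA p (Suc j) = cB p (Suc j)" if p: "Factorial_Ring.prime p" for p j
  proof -
    have "(\<Sum>v\<in>A. ee p (Suc j) (nA v)) = (\<Sum>v\<in>A. ee p j (nA v)) + cA p (Suc j)"
      unfolding ee_Suc cA_def using A by (simp add: sum.distrib sum_ind)
    moreover have "(\<Sum>w\<in>B. ee p (Suc j) (nB w)) = (\<Sum>w\<in>B. ee p j (nB w)) + cB p (Suc j)"
      unfolding ee_Suc cB_def using B by (simp add: sum.distrib sum_ind)
    ultimately show ?thesis using S[OF p, of j] S[OF p, of "Suc j"] by simp
  qed
  have mult_lt: "multiplicity p x < x" if "Factorial_Ring.prime p" "x > 0" for p x :: nat
  proof -
    have "p ^ multiplicity p x dvd x" by (rule multiplicity_dvd)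
    then have "p ^ multiplicity p x \<le> x" using that by (simp add: dvd_imp_le)
    moreover have "multiplicity p x < p ^ multiplicity p x"
    proof -
      have "multiplicity p x < 2 ^ multiplicity p x" by (rule less_exp)
      moreover have "(2::nat) ^ multiplicity p x \<le> p ^ multiplicity p x"
        using that prime_ge_2_nat by (intro power_mono) auto
      ultimately show ?thesis by (rule less_le_trans)
    qed
    ultimately show ?thesis by simp
  qed
  show ?thesis
  proof (cases "t = 0")
    case True
    define J where "J = Suc (sum nA A + sum nB B)"
    have "{v\<in>A. nA v = 0 \<or> J \<le> multiplicity 2 (nA v)} = {v\<in>A. nA v = 0}"
    proof -
      have "\<not> J \<le> multiplicity 2 (nA v)" if "v \<in> A" "nA v > 0" for v
      proof -
        have "nA v \<le> (\<Sum>v\<in>A. nA v)" using A that by (intro member_le_sum) auto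
        then show ?thesis using mult_lt[of 2 "nA v"] that unfolding J_def by simp
      qed
      then show ?thesis by auto
    qed
    moreover have "{w\<in>B. nB w = 0 \<or> J \<le> multiplicity 2 (nB w)} = {w\<in>B. nB w = 0}"
    proof -
      have "\<not> J \<le> multiplicity 2 (nB w)" if "w \<in> B" "nB w > 0" for w
      proof -
        have "nB w \<le> (\<Sum>w\<in>B. nB w)" using B that by (intro member_le_sum) auto
        then show ?thesis using mult_lt[of 2 "nB w"] that unfolding J_def by simp
      qed
      then show ?thesis by auto
    qed
    moreover have "cA 2 J = cB 2 J" using c[of 2] unfolding J_def by simp
    ultimately show ?thesis using True unfolding cA_def cB_def by simp
  next
    case t0: False
    show ?thesis
    proof (cases "good t")
      case False
      then have e1: "{v\<in>A. nA v = t} = {}" and e2: "{w\<in>B. nB w = t} = {}" using gA gB by auto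
      show ?thesis unfolding e1 e2 by simp
    next
      case True
      then obtain p k where p: "Factorial_Ring.prime p" and k: "k \<ge> 1" and t: "t = p ^ k"
        using t0 by (auto simp: good_def)
      have char: "x = p ^ k \<longleftrightarrow> (x = 0 \<or> k \<le> multiplicity p x) \<and> \<not> (x = 0 \<or> Suc k \<le> multiplicity p x)"
        if gx: "good x" for x
      proof
        assume "x = p ^ k" then show "(x = 0 \<or> k \<le> multiplicity p x) \<and> \<not> (x = 0 \<or> Suc k \<le> multiplicity p x)"
          using p by (simp add: prime_imp_prime_elem)
      next
        assume a: "(x = 0 \<or> k \<le> multiplicity p x) \<and> \<not> (x = 0 \<or> Suc k \<le> multiplicity p x)"
        then have x0: "x \<noteq> 0" and mk: "multiplicity p x = k" by auto
        then obtain q l where q: "Factorial_Ring.prime q" "l \<ge> 1" "x = q ^ l" using gx by (auto simp: good_def)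
        have "p dvd x" using mk k not_dvd_imp_multiplicity_0[of p x] by auto
        then have "p = q" using q p prime_dvd_power_iff[of p l q] primes_dvd_imp_eq by auto
        then show "x = p ^ k" using mk q by (simp add: prime_imp_prime_elem)
      qed
      have chA: "\<forall>v\<in>A. (nA v = t) = ((nA v = 0 \<or> k \<le> multiplicity p (nA v)) \<and> \<not> (nA v = 0 \<or> Suc k \<le> multiplicity p (nA v)))"
      proof
        fix v assume "v \<in> A"
        then have "good (nA v)" using gA by blast
        from char[OF this] show "(nA v = t) = ((nA v = 0 \<or> k \<le> multiplicity p (nA v)) \<and> \<not> (nA v = 0 \<or> Suc k \<le> multiplicity p (nA v)))"
          unfolding t .
      qed
      have setA: "{v\<in>A. nA v = t} = {v\<in>A. nA v = 0 \<or> k \<le> multiplicity p (nA v)} - {v\<in>A. nA v = 0 \<or> Suc k \<le> multiplicity p (nA v)}"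
        by (rule Set.set_eqI) (use chA in \<open>simp only: mem_Collect_eq Diff_iff; blast\<close>)
      have chB: "\<forall>w\<in>B. (nB w = t) = ((nB w = 0 \<or> k \<le> multiplicity p (nB w)) \<and> \<not> (nB w = 0 \<or> Suc k \<le> multiplicity p (nB w)))"
      proof
        fix w assume "w \<in> B"
        then have "good (nB w)" using gB by blast
        from char[OF this] show "(nB w = t) = ((nB w = 0 \<or> k \<le> multiplicity p (nB w)) \<and> \<not> (nB w = 0 \<or> Suc k \<le> multiplicity p (nB w)))"
          unfolding t .
      qed
      have setB: "{w\<in>B. nB w = t} = {w\<in>B. nB w = 0 \<or> k \<le> multiplicity p (nB w)} - {w\<in>B. nB w = 0 \<or> Suc k \<le> multiplicity p (nB w)}"
        by (rule Set.set_eqI) (use chB in \<open>simp only: mem_Collect_eq Diff_iff; blast\<close>)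
      have "card {v\<in>A. nA v = t} = cA p k - cA p (Suc k)"
      proof -
        have sub: "{v\<in>A. nA v = 0 \<or> Suc k \<le> multiplicity p (nA v)} \<subseteq> {v\<in>A. nA v = 0 \<or> k \<le> multiplicity p (nA v)}"
          by auto
        have fin: "finite {v\<in>A. nA v = 0 \<or> Suc k \<le> multiplicity p (nA v)}" using A by simp
        show ?thesis unfolding setA cA_def by (rule card_Diff_subset[OF fin sub])
      qed
      moreover have "card {w\<in>B. nB w = t} = cB p k - cB p (Suc k)"
      proof -
        have sub: "{w\<in>B. nB w = 0 \<or> Suc k \<le> multiplicity p (nB w)} \<subseteq> {w\<in>B. nB w = 0 \<or> k \<le> multiplicity p (nB w)}"
          by auto
        have fin: "finite {w\<in>B. nB w = 0 \<or> Suc k \<le> multiplicity p (nB w)}" using B by simp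
        show ?thesis unfolding setB cB_def by (rule card_Diff_subset[OF fin sub])
      qed
      moreover have "cA p k = cB p k" using c[OF p, of "k - 1"] k by simp
      ultimately show ?thesis using c[OF p, of k] by simp
    qed
  qed
qed




lemma MCS_exists:
  assumes V: "finite V" and S: "complete_sub V E S"
  shows "\<exists>\<Theta>\<in>MCS V E. S \<subseteq> \<Theta>"
proof -
  define C where "C = {T. complete_sub V E T \<and> S \<subseteq> T}"
  have "C \<subseteq> Pow V" unfolding C_def complete_sub_def by auto
  then have fin: "finite C" using V finite_subset by blast
  have ne: "C \<noteq> {}" using S unfolding C_def by auto
  obtain m where m: "m \<in> C" and mx: "\<forall>b\<in>C. m \<subseteq> b \<longrightarrow> m = b"
    using finite_has_maximal[OF fin ne] by blast
  have "m \<in> MCS V E" using m mx unfolding MCS_def C_def by auto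
  then show ?thesis using m unfolding C_def by blast
qed

lemma T0_rel_refl: "T0_rel V E u u" by (simp add: T0_rel_def)
lemma T0_rel_sym: "T0_rel V E u v \<Longrightarrow> T0_rel V E v u" by (simp add: T0_rel_def)
lemma T0_rel_trans: "T0_rel V E u v \<Longrightarrow> T0_rel V E v w \<Longrightarrow> T0_rel V E u w" by (simp add: T0_rel_def)

lemma T0_rel_adj:
  assumes g: "simple_graph V E" and u: "u \<in> V" and v: "v \<in> V" and r: "T0_rel V E u v" and ne: "u \<noteq> v"
  shows "E u v"
proof -
  have "complete_sub V E {u}" using u by (simp add: complete_sub_def)
  then obtain \<Theta> where T: "\<Theta> \<in> MCS V E" "u \<in> \<Theta>"
    using MCS_exists g by (force simp: simple_graph_def)
  then have "v \<in> \<Theta>" using r by (simp add: T0_rel_def)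
  then show ?thesis using T ne by (auto simp: MCS_def complete_sub_def)
qed

lemma adj_common_MCS:
  assumes g: "simple_graph V E" and e: "E u v"
  shows "\<exists>\<Theta>\<in>MCS V E. u \<in> \<Theta> \<and> v \<in> \<Theta>"
proof -
  have "complete_sub V E {u,v}" using g e by (auto simp: complete_sub_def simple_graph_def)
  then show ?thesis using MCS_exists g by (fastforce simp: simple_graph_def)
qed

lemma T0_class_mem: "u \<in> V \<Longrightarrow> u \<in> T0_class V E u"
  by (simp add: T0_class_def T0_rel_refl)

lemma T0_class_eq_iff: "u \<in> V \<Longrightarrow> v \<in> V \<Longrightarrow> T0_class V E u = T0_class V E v \<longleftrightarrow> T0_rel V E u v"
  unfolding T0_class_def
  by (auto simp: set_eq_iff intro: T0_rel_trans T0_rel_sym T0_rel_refl)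

lemma T0_class_sub: "T0_class V E u \<subseteq> V" by (auto simp: T0_class_def)

lemma T0_class_of_mem: "v \<in> T0_class V E u \<Longrightarrow> T0_class V E v = T0_class V E u"
  unfolding T0_class_def by (auto intro: T0_rel_trans T0_rel_sym)

lemma T0_adj_char:
  assumes g: "simple_graph V E" and u: "u \<in> V" and v: "v \<in> V"
  shows "T0_adj V E (T0_class V E u) (T0_class V E v) \<longleftrightarrow> E u v \<and> \<not> T0_rel V E u v"
proof
  assume a: "E u v \<and> \<not> T0_rel V E u v"
  show "T0_adj V E (T0_class V E u) (T0_class V E v)"
    unfolding T0_adj_def
    by (rule bexI[OF bexI[OF _ v] u]) (use a in simp)
next
  assume "T0_adj V E (T0_class V E u) (T0_class V E v)"
  then have "\<exists>u'\<in>V. \<exists>v'\<in>V. T0_class V E u = T0_class V E u' \<and> T0_class V E v = T0_class V E v' \<and>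
       E u' v' \<and> \<not> T0_rel V E u' v'" by (simp only: T0_adj_def)
  then obtain u' v' where u': "u' \<in> V" and v': "v' \<in> V"
    and cu: "T0_class V E u = T0_class V E u'" and cv: "T0_class V E v = T0_class V E v'"
    and e: "E u' v'" and nr: "\<not> T0_rel V E u' v'"
    by (elim bexE conjE)
  have ru: "T0_rel V E u u'" using T0_class_eq_iff[OF u u'] cu by simp
  have rv: "T0_rel V E v v'" using T0_class_eq_iff[OF v v'] cv by simp
  have nuv: "\<not> T0_rel V E u v"
  proof
    assume "T0_rel V E u v"
    then have "T0_rel V E u' v" by (rule T0_rel_trans[OF T0_rel_sym[OF ru]])
    then have "T0_rel V E u' v'" by (rule T0_rel_trans[OF _ rv])
    then show False using nr by simp
  qed
  obtain \<Theta> where T: "\<Theta> \<in> MCS V E" "u' \<in> \<Theta>" "v' \<in> \<Theta>" using adj_common_MCS[OF g e] by blast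
  have uT: "u \<in> \<Theta>" using ru T(1,2) unfolding T0_rel_def by blast
  have vT: "v \<in> \<Theta>" using rv T(1,3) unfolding T0_rel_def by blast
  have "u \<noteq> v" using nuv T0_rel_refl by metis
  moreover have "complete_sub V E \<Theta>" using T(1) by (simp add: MCS_def)
  ultimately have "E u v" using uT vT unfolding complete_sub_def by blast
  then show "E u v \<and> \<not> T0_rel V E u v" using nuv by simp
qed

lemma iso_T0_rel:
  assumes f: "bij_betw f V W" and adj: "\<forall>u\<in>V. \<forall>v\<in>V. E u v \<longleftrightarrow> F (f u) (f v)"
    and u: "u \<in> V" and v: "v \<in> V" and r: "T0_rel V E u v"
  shows "T0_rel W F (f u) (f v)"
  unfolding T0_rel_def
proof
  fix \<Theta> assume T: "\<Theta> \<in> MCS W F"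
  define \<Theta>' where "\<Theta>' = {x\<in>V. f x \<in> \<Theta>}"
  have TW: "\<Theta> \<subseteq> W" using T by (auto simp: MCS_def complete_sub_def)
  have fV: "f ` V = W" and inj: "inj_on f V" using f by (auto simp: bij_betw_def)
  have Tc: "complete_sub W F \<Theta>" using T by (simp add: MCS_def)
  have c': "complete_sub V E \<Theta>'"
    unfolding complete_sub_def
  proof (intro conjI ballI impI)
    show "\<Theta>' \<subseteq> V" unfolding \<Theta>'_def by blast
    fix a b assume a: "a \<in> \<Theta>'" and b: "b \<in> \<Theta>'" and ab: "a \<noteq> b"
    have aV: "a \<in> V" "f a \<in> \<Theta>" and bV: "b \<in> V" "f b \<in> \<Theta>" using a b unfolding \<Theta>'_def by auto
    have "f a \<noteq> f b" using inj aV bV ab by (metis inj_onD)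
    then have "F (f a) (f b)" using Tc aV bV unfolding complete_sub_def by blast
    then show "E a b" using adj aV bV by blast
  qed
  have "\<Theta>' \<in> MCS V E"
    unfolding MCS_def
  proof (intro CollectI conjI allI impI)
    show "complete_sub V E \<Theta>'" by (rule c')
    fix T' assume a: "complete_sub V E T' \<and> \<Theta>' \<subseteq> T'"
    have TV: "T' \<subseteq> V" using a by (simp add: complete_sub_def)
    have "complete_sub W F (f ` T')"
      unfolding complete_sub_def
    proof (intro conjI ballI impI)
      show "f ` T' \<subseteq> W" using TV fV by blast
      fix x y assume x: "x \<in> f ` T'" and y: "y \<in> f ` T'" and xy: "x \<noteq> y"
      then obtain a b where ab: "a \<in> T'" "b \<in> T'" "x = f a" "y = f b" by blast
      then have "a \<noteq> b" using xy by blast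
      then have "E a b" using a ab unfolding complete_sub_def by blast
      then show "F x y" using adj ab TV by blast
    qed
    moreover have "\<Theta> \<subseteq> f ` T'"
    proof
      fix y assume "y \<in> \<Theta>"
      then obtain x where "x \<in> V" "y = f x" using TW fV by blast
      then show "y \<in> f ` T'" using a \<open>y \<in> \<Theta>\<close> unfolding \<Theta>'_def by blast
    qed
    ultimately have "f ` T' = \<Theta>" using T unfolding MCS_def by blast
    then have "T' \<subseteq> \<Theta>'" using TV unfolding \<Theta>'_def by auto
    then show "T' = \<Theta>'" using a by blast
  qed
  then have "u \<in> \<Theta>' \<longleftrightarrow> v \<in> \<Theta>'" using r by (simp add: T0_rel_def)
  then show "f u \<in> \<Theta> \<longleftrightarrow> f v \<in> \<Theta>" using u v unfolding \<Theta>'_def by simp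
qed

lemma iso_T0_rel_iff:
  assumes f: "bij_betw f V W" and adj: "\<forall>u\<in>V. \<forall>v\<in>V. E u v \<longleftrightarrow> F (f u) (f v)"
    and u: "u \<in> V" and v: "v \<in> V"
  shows "T0_rel W F (f u) (f v) \<longleftrightarrow> T0_rel V E u v"
proof
  assume "T0_rel V E u v" then show "T0_rel W F (f u) (f v)" using iso_T0_rel[OF f adj u v] by simp
next
  assume r: "T0_rel W F (f u) (f v)"
  define g where "g = inv_into V f"
  have g: "bij_betw g W V" unfolding g_def using f by (rule bij_betw_inv_into)
  have gf: "\<And>x. x \<in> V \<Longrightarrow> g (f x) = x" unfolding g_def using f by (simp add: bij_betw_def)
  have fg: "\<And>y. y \<in> W \<Longrightarrow> f (g y) = y" unfolding g_def using f by (simp add: bij_betw_def f_inv_into_f)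
  have adj': "\<forall>x\<in>W. \<forall>y\<in>W. F x y \<longleftrightarrow> E (g x) (g y)"
    using adj fg g by (metis bij_betwE)
  have "f u \<in> W" "f v \<in> W" using f u v by (auto dest: bij_betwE)
  from iso_T0_rel[OF g adj' this r] show "T0_rel V E u v" using gf u v by simp
qed

lemma iso_T0_class:
  assumes f: "bij_betw f V W" and adj: "\<forall>u\<in>V. \<forall>v\<in>V. E u v \<longleftrightarrow> F (f u) (f v)"
    and u: "u \<in> V"
  shows "f ` T0_class V E u = T0_class W F (f u)"
proof -
  have fV: "f ` V = W" using f by (auto simp: bij_betw_def)
  show ?thesis
  proof
    show "f ` T0_class V E u \<subseteq> T0_class W F (f u)"
      using iso_T0_rel_iff[OF f adj u] fV unfolding T0_class_def by auto
    show "T0_class W F (f u) \<subseteq> f ` T0_class V E u"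
    proof
      fix w assume w: "w \<in> T0_class W F (f u)"
      then obtain x where x: "x \<in> V" "w = f x" using fV unfolding T0_class_def by auto
      then have "T0_rel V E u x" using w iso_T0_rel_iff[OF f adj u x(1)] unfolding T0_class_def by auto
      then show "w \<in> f ` T0_class V E u" using x unfolding T0_class_def by auto
    qed
  qed
qed

lemma product_group_reindex:
  fixes f :: "'a \<Rightarrow> 'c" and G :: "'a \<Rightarrow> ('g,'m) monoid_scheme" and H :: "'c \<Rightarrow> ('h,'n) monoid_scheme"
  assumes inj: "inj_on f A" and G: "\<And>a. a \<in> A \<Longrightarrow> group (G a)"
    and H: "\<And>a. a \<in> A \<Longrightarrow> group (H (f a))" and iso: "\<And>a. a \<in> A \<Longrightarrow> G a \<cong> H (f a)"
  shows "product_group A G \<cong> product_group (f ` A) H"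
proof -
  have 1: "product_group A G \<cong> product_group A (\<lambda>a. H (f a))"
    by (rule iso_product_groupI) (use G H iso in auto)
  define r where "r x = (\<lambda>w\<in>f ` A. x (inv_into A f w))" for x :: "'a \<Rightarrow> 'h"
  define s where "s y = (\<lambda>a\<in>A. y (f a))" for y :: "'c \<Rightarrow> 'h"
  have ia: "\<And>w. w \<in> f ` A \<Longrightarrow> inv_into A f w \<in> A" by (simp add: inv_into_into)
  have fi: "\<And>w. w \<in> f ` A \<Longrightarrow> f (inv_into A f w) = w" by (simp add: f_inv_into_f)
  have if': "\<And>a. a \<in> A \<Longrightarrow> inv_into A f (f a) = a" using inj by simp
  have "r \<in> iso (product_group A (\<lambda>a. H (f a))) (product_group (f ` A) H)"
  proof (rule isoI)
    show "r \<in> hom (product_group A (\<lambda>a. H (f a))) (product_group (f ` A) H)"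
    proof (rule homI)
      fix x assume x: "x \<in> carrier (product_group A (\<lambda>a. H (f a)))"
      show "r x \<in> carrier (product_group (f ` A) H)"
        unfolding carrier_product_group r_def
      proof (rule PiE_I)
        fix w assume w: "w \<in> f ` A"
        have "x (inv_into A f w) \<in> carrier (H (f (inv_into A f w)))"
          using x ia[OF w] by (auto simp: PiE_iff)
        then show "(\<lambda>w\<in>f ` A. x (inv_into A f w)) w \<in> carrier (H w)" using w fi by simp
      qed simp
    next
      fix x y assume x: "x \<in> carrier (product_group A (\<lambda>a. H (f a)))"
        and y: "y \<in> carrier (product_group A (\<lambda>a. H (f a)))"
      show "r (x \<otimes>\<^bsub>product_group A (\<lambda>a. H (f a))\<^esub> y) = r x \<otimes>\<^bsub>product_group (f ` A) H\<^esub> r y"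
        unfolding r_def mult_product_group
      proof (rule restrict_ext)
        fix w assume w: "w \<in> f ` A"
        show "(\<lambda>i\<in>A. x i \<otimes>\<^bsub>H (f i)\<^esub> y i) (inv_into A f w) =
              (\<lambda>w\<in>f ` A. x (inv_into A f w)) w \<otimes>\<^bsub>H w\<^esub> (\<lambda>w\<in>f ` A. y (inv_into A f w)) w"
          using w ia[OF w] fi[OF w] by simp
      qed
    qed
    show "bij_betw r (carrier (product_group A (\<lambda>a. H (f a)))) (carrier (product_group (f ` A) H))"
    proof (rule bij_betw_byWitness[where f' = s])
      show "\<forall>x\<in>carrier (product_group A (\<lambda>a. H (f a))). s (r x) = x"
      proof
        fix x assume x: "x \<in> carrier (product_group A (\<lambda>a. H (f a)))"
        have "x \<in> extensional A" using x by (simp add: PiE_iff)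
        then show "s (r x) = x"
          unfolding s_def r_def by (intro extensionalityI[of _ A]) (auto simp: if')
      qed
      show "\<forall>y\<in>carrier (product_group (f ` A) H). r (s y) = y"
      proof
        fix y assume y: "y \<in> carrier (product_group (f ` A) H)"
        have "y \<in> extensional (f ` A)" using y by (simp add: PiE_iff)
        then show "r (s y) = y"
          unfolding s_def r_def by (intro extensionalityI[of _ "f ` A"]) (auto simp: ia fi)
      qed
      show "r ` carrier (product_group A (\<lambda>a. H (f a))) \<subseteq> carrier (product_group (f ` A) H)"
      proof
        fix z assume "z \<in> r ` carrier (product_group A (\<lambda>a. H (f a)))"
        then obtain x where x: "x \<in> carrier (product_group A (\<lambda>a. H (f a)))" and z: "z = r x" by blast
        show "z \<in> carrier (product_group (f ` A) H)"
          unfolding z carrier_product_group r_def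
        proof (rule PiE_I)
          fix w assume w: "w \<in> f ` A"
          have "x (inv_into A f w) \<in> carrier (H (f (inv_into A f w)))"
            using x ia[OF w] by (auto simp: PiE_iff)
          then show "(\<lambda>w\<in>f ` A. x (inv_into A f w)) w \<in> carrier (H w)" using w fi by simp
        qed simp
      qed
      show "s ` carrier (product_group (f ` A) H) \<subseteq> carrier (product_group A (\<lambda>a. H (f a)))"
        unfolding s_def by (auto simp: PiE_iff)
    qed
  qed
  then have 2: "product_group A (\<lambda>a. H (f a)) \<cong> product_group (f ` A) H" by (auto simp: is_iso_def)
  show ?thesis using iso_trans[OF 1 2] .
qed




lemma fiber_bij:
  fixes f :: "'a \<Rightarrow> nat" and g :: "'b \<Rightarrow> nat"
  assumes A: "finite A" and B: "finite B"
    and c: "\<And>t. card {a\<in>A. f a = t} = card {b\<in>B. g b = t}"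
  shows "\<exists>h. bij_betw h A B \<and> (\<forall>a\<in>A. g (h a) = f a)"
proof -
  have "\<forall>t. \<exists>h. bij_betw h {a\<in>A. f a = t} {b\<in>B. g b = t}"
    using A B c by (intro allI finite_same_card_bij) auto
  then obtain hb where hb: "\<And>t. bij_betw (hb t) {a\<in>A. f a = t} {b\<in>B. g b = t}" by metis
  define h where "h a = hb (f a) a" for a
  have hf: "h a \<in> B \<and> g (h a) = f a" if "a \<in> A" for a
    using bij_betwE[OF hb[of "f a"]] that unfolding h_def by blast
  have "bij_betw h A B"
    unfolding bij_betw_def
  proof
    show "inj_on h A"
    proof (rule inj_onI)
      fix a a' assume a: "a \<in> A" and a': "a' \<in> A" and e: "h a = h a'"
      then have ft: "f a = f a'" using hf by metis
      have "hb (f a) a = hb (f a) a'" using e ft unfolding h_def by simp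
      moreover have "inj_on (hb (f a)) {x\<in>A. f x = f a}" using hb by (simp add: bij_betw_def)
      ultimately show "a = a'" using a a' ft by (auto dest: inj_onD)
    qed
    show "h ` A = B"
    proof
      show "h ` A \<subseteq> B" using hf by blast
      show "B \<subseteq> h ` A"
      proof
        fix b assume b: "b \<in> B"
        then have "b \<in> hb (g b) ` {a\<in>A. f a = g b}"
          using hb[of "g b"] by (simp add: bij_betw_def)
        then obtain a where a: "a \<in> A" "f a = g b" "b = hb (g b) a" by blast
        then have "h a = b" unfolding h_def by simp
        then show "b \<in> h ` A" using a by blast
      qed
    qed
  qed
  then show ?thesis using hf by blast
qed

lemma T0_verts_sub: "S \<in> T0_verts V E \<Longrightarrow> S \<subseteq> V"
  by (auto simp: T0_verts_def T0_class_def)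

lemma good_card:
  assumes "dir_indec_cyclic K"
  shows "good (card (carrier K))"
  using assms unfolding dir_indec_cyclic_def good_def by auto

theorem lemma3p4:
  fixes V :: "'a set" and E :: "'a \<Rightarrow> 'a \<Rightarrow> bool" and G :: "'a \<Rightarrow> ('g, 'm) monoid_scheme"
    and W :: "'b set" and F :: "'b \<Rightarrow> 'b \<Rightarrow> bool" and H :: "'b \<Rightarrow> ('h, 'n) monoid_scheme"
  assumes "labeled_graph V E G" and "labeled_graph W F H"
    and "\<forall>v\<in>V. dir_indec_cyclic (G v)" and "\<forall>w\<in>W. dir_indec_cyclic (H w)"
  shows "lg_iso V E G W F H \<longleftrightarrow>
         lg_iso (T0_verts V E) (T0_adj V E) (T0_labels G) (T0_verts W F) (T0_adj W F) (T0_labels H)"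
proof -
  have gV: "simple_graph V E" using assms(1) unfolding labeled_graph_def by (rule conjunct1)
  have gW: "simple_graph W F" using assms(2) unfolding labeled_graph_def by (rule conjunct1)
  have grG: "\<And>v. v \<in> V \<Longrightarrow> group (G v)" using assms(1) unfolding labeled_graph_def by blast
  have grH: "\<And>w. w \<in> W \<Longrightarrow> group (H w)" using assms(2) unfolding labeled_graph_def by blast
  have finV: "finite V" and finW: "finite W" using gV gW by (auto simp: simple_graph_def)
  have irrV: "\<And>u. \<not> E u u" and irrW: "\<And>w. \<not> F w w" using gV gW by (auto simp: simple_graph_def)
  show ?thesis
  proof
    assume "lg_iso V E G W F H"
    then obtain f where f: "bij_betw f V W" and adj: "\<forall>u\<in>V. \<forall>v\<in>V. E u v \<longleftrightarrow> F (f u) (f v)"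
      and lab: "\<forall>u\<in>V. G u \<cong> H (f u)"
      unfolding lg_iso_def by blast
    have inj: "inj_on f V" and fV: "f ` V = W" using f by (auto simp: bij_betw_def)
    have cls: "\<And>u. u \<in> V \<Longrightarrow> f ` T0_class V E u = T0_class W F (f u)"
      by (rule iso_T0_class[OF f adj])
    show "lg_iso (T0_verts V E) (T0_adj V E) (T0_labels G) (T0_verts W F) (T0_adj W F) (T0_labels H)"
      unfolding lg_iso_def
    proof (intro exI[of _ "image f"] conjI ballI)
      show "bij_betw (image f) (T0_verts V E) (T0_verts W F)"
        unfolding bij_betw_def
      proof
        show "inj_on (image f) (T0_verts V E)"
        proof (rule inj_onI)
          fix XX YY assume XX: "XX \<in> T0_verts V E" and YY: "YY \<in> T0_verts V E" and e: "f ` XX = f ` YY"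
          have "XX \<subseteq> V" "YY \<subseteq> V" using XX YY by (simp_all add: T0_verts_sub)
          then show "XX = YY" using e inj by (simp add: inj_on_image_eq_iff)
        qed
        have "image f ` T0_verts V E = (\<lambda>u. T0_class W F (f u)) ` V"
          unfolding T0_verts_def image_image using cls by (rule image_cong[OF refl])
        also have "\<dots> = T0_verts W F" unfolding T0_verts_def fV[symmetric] image_image ..
        finally show "image f ` T0_verts V E = T0_verts W F" .
      qed
    next
      fix XX YY assume XX: "XX \<in> T0_verts V E" and YY: "YY \<in> T0_verts V E"
      then obtain u v where u: "u \<in> V" and v: "v \<in> V" and Xu: "XX = T0_class V E u" and Yv: "YY = T0_class V E v"
        unfolding T0_verts_def by blast
      have fu: "f u \<in> W" and fv: "f v \<in> W" using u v fV by blast+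
      show "T0_adj V E XX YY \<longleftrightarrow> T0_adj W F (f ` XX) (f ` YY)"
        unfolding Xu Yv cls[OF u] cls[OF v] T0_adj_char[OF gV u v] T0_adj_char[OF gW fu fv]
        using adj u v iso_T0_rel_iff[OF f adj u v] by simp
    next
      fix XX assume XX: "XX \<in> T0_verts V E"
      have XV: "XX \<subseteq> V" using XX by (simp add: T0_verts_sub)
      show "T0_labels G XX \<cong> T0_labels H (f ` XX)"
        unfolding T0_labels_def
      proof (rule product_group_reindex)
        show "inj_on f XX" using inj XV by (rule inj_on_subset)
        fix a assume "a \<in> XX"
        then have a: "a \<in> V" using XV by blast
        show "group (G a)" using grG[OF a] .
        show "group (H (f a))" using grH a fV by blast
        show "G a \<cong> H (f a)" using lab a by blast
      qed
    qed
  next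
    assume "lg_iso (T0_verts V E) (T0_adj V E) (T0_labels G) (T0_verts W F) (T0_adj W F) (T0_labels H)"
    then obtain \<Phi> where \<Phi>: "bij_betw \<Phi> (T0_verts V E) (T0_verts W F)"
      and adj\<Phi>: "\<forall>XX\<in>T0_verts V E. \<forall>YY\<in>T0_verts V E. T0_adj V E XX YY \<longleftrightarrow> T0_adj W F (\<Phi> XX) (\<Phi> YY)"
      and lab\<Phi>: "\<forall>XX\<in>T0_verts V E. T0_labels G XX \<cong> T0_labels H (\<Phi> XX)"
      unfolding lg_iso_def by blast
    define nG where "nG v = card (carrier (G v))" for v
    define nH where "nH w = card (carrier (H w))" for w
    have isoG: "\<And>v. v \<in> V \<Longrightarrow> integer_mod_group (nG v) \<cong> G v"
      unfolding nG_def using assms(3) grG by (intro cyclic_iso_Zmod) (auto simp: dir_indec_cyclic_def)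
    have isoH: "\<And>w. w \<in> W \<Longrightarrow> integer_mod_group (nH w) \<cong> H w"
      unfolding nH_def using assms(4) grH by (intro cyclic_iso_Zmod) (auto simp: dir_indec_cyclic_def)
    have goodG: "\<forall>v\<in>V. good (nG v)" unfolding nG_def using assms(3) good_card by blast
    have goodH: "\<forall>w\<in>W. good (nH w)" unfolding nH_def using assms(4) good_card by blast
    have \<Phi>W: "\<And>XX. XX \<in> T0_verts V E \<Longrightarrow> \<Phi> XX \<in> T0_verts W F" using \<Phi> by (simp add: bij_betwE)
    have vsubV: "\<And>XX. XX \<in> T0_verts V E \<Longrightarrow> XX \<subseteq> V" by (rule T0_verts_sub)
    have vsubW: "\<And>XX. XX \<in> T0_verts W F \<Longrightarrow> XX \<subseteq> W" by (rule T0_verts_sub)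
    have cnt: "\<exists>h. bij_betw h XX (\<Phi> XX) \<and> (\<forall>v\<in>XX. nH (h v) = nG v)" if XX: "XX \<in> T0_verts V E" for XX
    proof -
      have XV: "XX \<subseteq> V" using vsubV XX .
      have YW: "\<Phi> XX \<subseteq> W" using vsubW \<Phi>W XX by blast
      have finX: "finite XX" using XV finV finite_subset by blast
      have finY: "finite (\<Phi> XX)" using YW finW finite_subset by blast
      have i1: "product_group XX (\<lambda>v. integer_mod_group (nG v)) \<cong> product_group XX G"
        by (rule iso_product_groupI) (use isoG grG XV in auto)
      have i2: "product_group XX G \<cong> product_group (\<Phi> XX) H"
        using lab\<Phi> XX unfolding T0_labels_def by blast
      have i3: "product_group (\<Phi> XX) H \<cong> product_group (\<Phi> XX) (\<lambda>w. integer_mod_group (nH w))"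
        by (rule iso_product_groupI) (use isoH grH YW in \<open>auto intro: group.iso_sym[OF group_integer_mod_group]\<close>)
      have "product_group XX (\<lambda>v. integer_mod_group (nG v)) \<cong> product_group (\<Phi> XX) (\<lambda>w. integer_mod_group (nH w))"
        using iso_trans[OF iso_trans[OF i1 i2] i3] .
      then obtain \<phi> where \<phi>: "\<phi> \<in> iso (product_group XX (\<lambda>v. integer_mod_group (nG v))) (product_group (\<Phi> XX) (\<lambda>w. integer_mod_group (nH w)))"
        by (auto simp: is_iso_def)
      have eq: "\<forall>m>0. (\<Prod>v\<in>XX. gcd m (nG v)) = (\<Prod>w\<in>\<Phi> XX. gcd m (nH w))"
      proof (intro allI impI)
        fix m :: nat assume m: "m > 0"
        have grP: "group (product_group XX (\<lambda>v. integer_mod_group (nG v)))" by simp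
        have "card (carrier (product_group XX (\<lambda>v. integer_mod_group (nG v))) // powrel (product_group XX (\<lambda>v. integer_mod_group (nG v))) m) = (\<Prod>v\<in>XX. gcd m (nG v))"
          by (rule idx_Zmod[OF grP finX m iso_set_refl])
        moreover have "card (carrier (product_group XX (\<lambda>v. integer_mod_group (nG v))) // powrel (product_group XX (\<lambda>v. integer_mod_group (nG v))) m) = (\<Prod>w\<in>\<Phi> XX. gcd m (nH w))"
          by (rule idx_Zmod[OF grP finY m \<phi>])
        ultimately show "(\<Prod>v\<in>XX. gcd m (nG v)) = (\<Prod>w\<in>\<Phi> XX. gcd m (nH w))" by simp
      qed
      have "\<And>t. card {v\<in>XX. nG v = t} = card {w\<in>\<Phi> XX. nH w = t}"
        by (rule count_eq[OF finX finY _ _ eq]) (use goodG goodH XV YW in auto)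
      then show ?thesis using fiber_bij[OF finX finY] by blast
    qed
    then obtain hh where hh: "\<And>XX. XX \<in> T0_verts V E \<Longrightarrow> bij_betw (hh XX) XX (\<Phi> XX) \<and> (\<forall>v\<in>XX. nH (hh XX v) = nG v)"
      by metis
    define cl where "cl v = T0_class V E v" for v
    define gm where "gm v = hh (cl v) v" for v
    have clV: "\<And>v. v \<in> V \<Longrightarrow> cl v \<in> T0_verts V E" unfolding cl_def T0_verts_def by blast
    have K: "gm v \<in> W \<and> T0_class W F (gm v) = \<Phi> (cl v)" if v: "v \<in> V" for v
    proof -
      have "gm v \<in> \<Phi> (cl v)" unfolding gm_def using hh[OF clV[OF v]] T0_class_mem[OF v] unfolding cl_def
        by (auto dest: bij_betwE)
      moreover obtain w0 where "w0 \<in> W" "\<Phi> (cl v) = T0_class W F w0" using \<Phi>W[OF clV[OF v]] unfolding T0_verts_def by blast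
      ultimately have "T0_class W F (gm v) = \<Phi> (cl v)" and "gm v \<in> T0_class W F w0" by (metis T0_class_of_mem)+
      then show ?thesis using T0_class_sub[of W F w0] by blast
    qed
    have nK: "nH (gm v) = nG v" if v: "v \<in> V" for v
      using hh[OF clV[OF v]] T0_class_mem[OF v] unfolding gm_def cl_def by blast
    have injP: "inj_on \<Phi> (T0_verts V E)" using \<Phi> by (simp add: bij_betw_def)
    have clK: "cl u = cl v \<longleftrightarrow> \<Phi> (cl u) = \<Phi> (cl v)" if "u \<in> V" "v \<in> V" for u v
      using injP clV that by (auto dest: inj_onD)
    have gmrel: "T0_rel W F (gm u) (gm v) \<longleftrightarrow> T0_rel V E u v" if u: "u \<in> V" and v: "v \<in> V" for u v
    proof -
      have "T0_rel W F (gm u) (gm v) \<longleftrightarrow> T0_class W F (gm u) = T0_class W F (gm v)"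
        using K u v T0_class_eq_iff by metis
      also have "\<dots> \<longleftrightarrow> cl u = cl v" using K u v clK by metis
      also have "\<dots> \<longleftrightarrow> T0_rel V E u v" unfolding cl_def using T0_class_eq_iff u v by metis
      finally show ?thesis .
    qed
    have injg: "inj_on gm V"
    proof (rule inj_onI)
      fix u v assume u: "u \<in> V" and v: "v \<in> V" and e: "gm u = gm v"
      then have "T0_rel V E u v" using gmrel T0_rel_refl by metis
      then have c: "cl u = cl v" unfolding cl_def using T0_class_eq_iff u v by metis
      have "v \<in> cl u" using c T0_class_mem[OF v] unfolding cl_def by simp
      moreover have "u \<in> cl u" using T0_class_mem[OF u] unfolding cl_def by simp
      moreover have "hh (cl u) u = hh (cl u) v" using e c unfolding gm_def by simp
      moreover have "inj_on (hh (cl u)) (cl u)" using hh[OF clV[OF u]] by (simp add: bij_betw_def)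
      ultimately show "u = v" by (auto dest: inj_onD)
    qed
    have surjg: "gm ` V = W"
    proof
      show "gm ` V \<subseteq> W" using K by blast
      show "W \<subseteq> gm ` V"
      proof
        fix w assume w: "w \<in> W"
        have "T0_class W F w \<in> T0_verts W F" using w unfolding T0_verts_def by blast
        then obtain XX where XX: "XX \<in> T0_verts V E" and PX: "\<Phi> XX = T0_class W F w"
          using \<Phi> unfolding bij_betw_def by (metis imageE)
        have "w \<in> \<Phi> XX" using PX T0_class_mem[OF w] by simp
        then have "w \<in> hh XX ` XX" using hh[OF XX] unfolding bij_betw_def by simp
        then obtain v where v: "v \<in> XX" "hh XX v = w" by (rule imageE) simp
        obtain u where u: "u \<in> V" "XX = T0_class V E u" using XX unfolding T0_verts_def by blast
        have vV: "v \<in> V" using v(1) XX T0_verts_sub by blast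
        have "cl v = XX" unfolding cl_def using T0_class_of_mem[of v V E u] v(1) u(2) by simp
        then have "gm v = w" unfolding gm_def using v by simp
        then show "w \<in> gm ` V" using vV by blast
      qed
    qed
    show "lg_iso V E G W F H"
      unfolding lg_iso_def
    proof (intro exI[of _ gm] conjI ballI)
      show "bij_betw gm V W" using injg surjg by (simp add: bij_betw_def)
    next
      fix u v assume u: "u \<in> V" and v: "v \<in> V"
      have gu: "gm u \<in> W" and gv: "gm v \<in> W" using K u v by blast+
      show "E u v \<longleftrightarrow> F (gm u) (gm v)"
      proof (cases "T0_rel V E u v")
        case True
        then have r: "T0_rel W F (gm u) (gm v)" using gmrel u v by blast
        have "E u v \<longleftrightarrow> u \<noteq> v" using T0_rel_adj[OF gV u v True] irrV by metis
        moreover have "F (gm u) (gm v) \<longleftrightarrow> gm u \<noteq> gm v" using T0_rel_adj[OF gW gu gv r] irrW by metis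
        moreover have "u \<noteq> v \<longleftrightarrow> gm u \<noteq> gm v" using injg u v by (auto dest: inj_onD)
        ultimately show ?thesis by simp
      next
        case False
        then have r: "\<not> T0_rel W F (gm u) (gm v)" using gmrel u v by blast
        have "E u v \<longleftrightarrow> T0_adj V E (cl u) (cl v)" unfolding cl_def using T0_adj_char[OF gV u v] False by simp
        also have "\<dots> \<longleftrightarrow> T0_adj W F (\<Phi> (cl u)) (\<Phi> (cl v))" using adj\<Phi> clV u v by blast
        also have "\<dots> \<longleftrightarrow> T0_adj W F (T0_class W F (gm u)) (T0_class W F (gm v))" using K u v by simp
        also have "\<dots> \<longleftrightarrow> F (gm u) (gm v)" using T0_adj_char[OF gW gu gv] r by simp
        finally show ?thesis .
      qed
    next
      fix u assume u: "u \<in> V"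
      have "G u \<cong> integer_mod_group (nG u)" using isoG[OF u] group.iso_sym by (metis group_integer_mod_group)
      also have "integer_mod_group (nG u) = integer_mod_group (nH (gm u))" using nK u by simp
      also have "integer_mod_group (nH (gm u)) \<cong> H (gm u)" using isoH K u by blast
      finally show "G u \<cong> H (gm u)" .
    qed
  qed
qed


end
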